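(* A set $S\subseteq\mathbb Z$ is $a$-nice for some $a\in\mathbb Z$ if and only if the following three conditions hold: (1) if $b\in S$ then $b-n\in S$; (2) $|S\cap\mathbb Z_{>0}|<\infty$; (3) $|\mathbb Z_{<0}\setminus S|<\infty$.
   Context: $\hat S_n$ is the affine symmetric group with generators $s_0,\dots,s_{n-1}$ (indices mod $n$). It acts on $\mathbb Z$ by $s_i(a)=a+1$ if $a\equiv i\pmod n$, $s_i(a)=a-1$ if $a\equiv i+1\pmod n$, and $s_i(a)=a$ otherwise; this induces an action on subsets of $\mathbb Z$. Let $\mathbb Z_{\le a}=\{b\in\mathbb Z: b\le a\}$. A subset $S\subseteq\mathbb Z$ is $a$-nice if $S=w(\mathbb Z_{\le a})$ for some $w\in\hat S_n$. *)

theory Defs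
  imports Main
begin

definition affgen :: "nat \<Rightarrow> int \<Rightarrow> int \<Rightarrow> int" where
  "affgen n i a =
     (if a mod int n = i mod int n then a + 1
      else if a mod int n = (i + 1) mod int n then a - 1
      else a)"

text \<open>Elements of the affine symmetric group: finite products of generators
  s_0, ..., s_(n-1), realised as their action on the integers.\<close>
definition affperm :: "nat \<Rightarrow> (int \<Rightarrow> int) set" where
  "affperm n = {foldr (\<lambda>i f. affgen n i \<circ> f) is id | is.
                  set is \<subseteq> {0..<int n}}"

definition nice :: "nat \<Rightarrow> int \<Rightarrow> int set \<Rightarrow> bool" where
  "nice n a S \<longleftrightarrow> (\<exists>w \<in> affperm n. S = w ` {..a})"

end

theory Submission imports Defs begin

lemma mod_eq_dvd: "((x::int) mod N = y mod N) \<longleftrightarrow> N dvd (x - y)"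
  by (simp add: mod_eq_dvd_iff)

lemma succ_mod_ne: assumes "n \<ge> 2" shows "((i::int) + 1) mod int n \<noteq> i mod int n"
proof
  assume "(i + 1) mod int n = i mod int n"
  then have "int n dvd 1" by (simp add: mod_eq_dvd)
  then show False using assms by simp
qed

lemma affgen_invol: assumes "n \<ge> 2" shows "affgen n i (affgen n i a) = a"
proof -
  have ne: "(i + 1) mod int n \<noteq> i mod int n" using succ_mod_ne[OF assms] .
  consider "a mod int n = i mod int n" | "a mod int n \<noteq> i mod int n" "a mod int n = (i+1) mod int n"
    | "a mod int n \<noteq> i mod int n" "a mod int n \<noteq> (i+1) mod int n" by blast
  then show ?thesis
  proof cases
    case 1
    then have "(a+1) mod int n = (i+1) mod int n" by (simp add: mod_eq_dvd)
    then show ?thesis using 1 ne by (simp add: affgen_def)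
  next
    case 2
    then have "int n dvd (a - (i+1))" by (simp add: mod_eq_dvd)
    moreover have "a - (i+1) = (a - 1) - i" by simp
    ultimately have "(a-1) mod int n = i mod int n" by (simp add: mod_eq_dvd)
    then show ?thesis using 2 ne by (simp add: affgen_def)
  next
    case 3 then show ?thesis by (simp add: affgen_def)
  qed
qed

lemma affgen_per: "affgen n i (b + int n) = affgen n i b + int n"
  by (simp add: affgen_def)

lemma affgen_bd: "\<bar>affgen n i b - b\<bar> \<le> 1"
  by (simp add: affgen_def)

lemma affperm_cases: "w \<in> affperm n \<Longrightarrow> \<exists>is. w = foldr (\<lambda>i f. affgen n i \<circ> f) is id"
  by (auto simp: affperm_def)

lemma foldr_per: "foldr (\<lambda>i f. affgen n i \<circ> f) is id (b + int n) = foldr (\<lambda>i f. affgen n i \<circ> f) is id b + int n"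
  by (induction "is" arbitrary: b) (simp_all add: affgen_per)

lemma foldr_surj: assumes "n \<ge> 2" shows "surj (foldr (\<lambda>i f. affgen n i \<circ> f) is id)"
proof (induction "is")
  case Nil then show ?case by simp
next
  case (Cons i "is")
  have "surj (affgen n i)" by (metis affgen_invol[OF assms] surjI)
  from comp_surj[OF Cons.IH this] show ?case by simp
qed

lemma foldr_bd: "\<bar>foldr (\<lambda>i f. affgen n i \<circ> f) is id b - b\<bar> \<le> int (length is)"
proof (induction "is")
  case Nil then show ?case by simp
next
  case (Cons i "is")
  have "\<bar>affgen n i (foldr (\<lambda>i f. affgen n i \<circ> f) is id b) - foldr (\<lambda>i f. affgen n i \<circ> f) is id b\<bar> \<le> 1"
    by (rule affgen_bd)
  moreover have "foldr (\<lambda>i f. affgen n i \<circ> f) (i # is) id b = affgen n i (foldr (\<lambda>i f. affgen n i \<circ> f) is id b)" by simp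
  moreover have "int (length (i # is)) = 1 + int (length is)" by simp
  ultimately show ?case using Cons.IH by linarith
qed

lemma forward:
  assumes n: "n \<ge> 2" and w: "w \<in> affperm n" and S: "S = w ` {..a}"
  shows "(\<forall>b\<in>S. b - int n \<in> S) \<and> finite (S \<inter> {0<..}) \<and> finite ({..<0} - S)"
proof -
  obtain "is" where wd: "w = foldr (\<lambda>i f. affgen n i \<circ> f) is id" using affperm_cases[OF w] by blast
  define L where "L = int (length is)"
  have per: "\<And>b. w (b + int n) = w b + int n" using foldr_per wd by simp
  have sj: "surj w" using foldr_surj[OF n] wd by simp
  have bd: "\<And>b. \<bar>w b - b\<bar> \<le> L" using foldr_bd wd L_def by simp
  have 1: "\<forall>b\<in>S. b - int n \<in> S"
  proof
    fix b assume "b \<in> S"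
    then obtain c where c: "c \<le> a" "b = w c" using S by auto
    have "w (c - int n) + int n = b" using per[of "c - int n"] c by simp
    then have "b - int n = w (c - int n)" by simp
    then show "b - int n \<in> S" using c S by auto
  qed
  have 2: "S \<inter> {0<..} \<subseteq> {0<..a+L}"
  proof
    fix b assume "b \<in> S \<inter> {0<..}"
    then obtain c where c: "c \<le> a" "b = w c" "b > 0" using S by auto
    then show "b \<in> {0<..a+L}" using bd[of c] by auto
  qed
  have 3: "{..<0} - S \<subseteq> {a-L..<0}"
  proof
    fix b assume b: "b \<in> {..<0} - S"
    obtain c where c: "b = w c" using sj by (metis surjD)
    have "\<not> c \<le> a" using b c S by auto
    then show "b \<in> {a-L..<0}" using bd[of c] b c by auto
  qed
  show ?thesis using 1 finite_subset[OF 2] finite_subset[OF 3] by simp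
qed

definition hset :: "nat \<Rightarrow> (int \<Rightarrow> int) \<Rightarrow> int set" where
  "hset n v = {x. x \<le> v (x mod int n)}"

lemma image_invol: assumes "\<And>a. f (f a) = a" shows "y \<in> f ` A \<longleftrightarrow> f y \<in> A"
proof
  assume "y \<in> f ` A" then show "f y \<in> A" using assms by auto
next
  assume "f y \<in> A" then show "y \<in> f ` A" using assms by (intro image_eqI[where x="f y"]) auto
qed

lemma swap_set:
  assumes n: "n \<ge> 2" and j: "j \<in> {0..<int n}" and j': "j' = (j + 1) mod int n"
  shows "affgen n j ` hset n v = hset n (v(j' := v j + 1, j := v j' - 1))"
proof -
  have ne: "j' \<noteq> j" using succ_mod_ne[OF n, of j] j j' by simp
  have jm: "j mod int n = j" using j by simp
  show ?thesis
  proof (rule set_eqI)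
    fix y
    have "y \<in> affgen n j ` hset n v \<longleftrightarrow> affgen n j y \<in> hset n v"
      by (rule image_invol, rule affgen_invol[OF n])
    also have "\<dots> \<longleftrightarrow> y \<in> hset n (v(j' := v j + 1, j := v j' - 1))"
    proof -
      consider "y mod int n = j" | "y mod int n = j'" | "y mod int n \<noteq> j" "y mod int n \<noteq> j'" by blast
      then show ?thesis
      proof cases
        case 1
        then have "(y + 1) mod int n = j'" using j' mod_add_left_eq[of y "int n" 1] by simp
        then show ?thesis using 1 jm by (simp add: affgen_def hset_def) linarith
      next
        case 2
        then have "int n dvd (y - (j+1))" using j' mod_eq_dvd[of y "int n" "j+1"] by simp
        moreover have "y - (j+1) = (y - 1) - j" by simp
        ultimately have "(y - 1) mod int n = j" using jm mod_eq_dvd[of "y-1" "int n" j] by simp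
        then show ?thesis using 2 jm ne j' by (simp add: affgen_def hset_def) linarith
      next
        case 3
        then show ?thesis using jm j' by (simp add: affgen_def hset_def)
      qed
    qed
    finally show "y \<in> affgen n j ` hset n v \<longleftrightarrow> y \<in> hset n (v(j' := v j + 1, j := v j' - 1))" .
  qed
qed

lemma id_affperm: "id \<in> affperm n"
  unfolding affperm_def by (rule CollectI, rule exI[of _ "[]"]) simp

lemma cons_affperm: "w \<in> affperm n \<Longrightarrow> j \<in> {0..<int n} \<Longrightarrow> affgen n j \<circ> w \<in> affperm n"
proof -
  assume w: "w \<in> affperm n" and j: "j \<in> {0..<int n}"
  then obtain "is" where "w = foldr (\<lambda>i f. affgen n i \<circ> f) is id" "set is \<subseteq> {0..<int n}"
    by (auto simp: affperm_def)
  then have "affgen n j \<circ> w = foldr (\<lambda>i f. affgen n i \<circ> f) (j # is) id" "set (j # is) \<subseteq> {0..<int n}"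
    using j by auto
  then show ?thesis unfolding affperm_def by blast
qed

lemma down_all: assumes "\<And>x. x + 1 \<in> A \<Longrightarrow> x \<in> A" "a \<in> A" shows "a - int k \<in> A"
proof (induction k)
  case 0 then show ?case using assms by simp
next
  case (Suc k)
  have "(a - int (Suc k)) + 1 = a - int k" by simp
  with Suc.IH have "(a - int (Suc k)) + 1 \<in> A" by simp
  then show ?case by (rule assms(1))
qed

lemma main_ind:
  assumes n: "n \<ge> 2"
  shows "\<forall>v. (\<forall>r\<in>{0..<int n}. v r mod int n = r) \<longrightarrow> nat (\<Sum>r\<in>{0..<int n}. (v r)^2) = m \<longrightarrow>
     (\<exists>a. \<exists>w\<in>affperm n. hset n v = w ` {..a})"
proof (induction m rule: less_induct)
  case (less m)
  show ?case
  proof (intro allI impI)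
    fix v assume norm: "\<forall>r\<in>{0..<int n}. v r mod int n = r" and mdef: "nat (\<Sum>r\<in>{0..<int n}. (v r)^2) = m"
    have Npos: "int n > 0" using n by simp
    show "\<exists>a. \<exists>w\<in>affperm n. hset n v = w ` {..a}"
    proof (cases "\<forall>x. x + 1 \<in> hset n v \<longrightarrow> x \<in> hset n v")
      case True
      define a where "a = Max (v ` {0..<int n})"
      have fin: "finite (v ` {0..<int n})" "v ` {0..<int n} \<noteq> {}" using Npos by auto
      obtain r0 where r0: "r0 \<in> {0..<int n}" "a = v r0" using Max_in[OF fin] a_def by auto
      have ain: "a \<in> hset n v" using r0 norm by (simp add: hset_def)
      have "hset n v = {..a}"
      proof
        show "hset n v \<subseteq> {..a}"
        proof
          fix x assume "x \<in> hset n v"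
          then have "x \<le> v (x mod int n)" by (simp add: hset_def)
          moreover have "x mod int n \<in> {0..<int n}" using Npos by simp
          then have "v (x mod int n) \<le> a" unfolding a_def using fin by simp
          ultimately show "x \<in> {..a}" by simp
        qed
      next
        show "{..a} \<subseteq> hset n v"
        proof
          fix y assume "y \<in> {..a}"
          then have "y = a - int (nat (a - y))" by simp
          moreover have "a - int (nat (a - y)) \<in> hset n v"
            by (rule down_all) (use True ain in auto)
          ultimately show "y \<in> hset n v" by simp
        qed
      qed
      then have "hset n v = id ` {..a}" by simp
      then show ?thesis using id_affperm[of n] by blast
    next
      case False
      then obtain x where x: "x + 1 \<in> hset n v" "x \<notin> hset n v" by blast
      define j where "j = x mod int n"
      define j' where "j' = (j + 1) mod int n"
      have jr: "j \<in> {0..<int n}" using Npos j_def by simp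
      have j'r: "j' \<in> {0..<int n}" using Npos j'_def by simp
      have ne: "j' \<noteq> j" using succ_mod_ne[OF n, of j] jr j'_def by simp
      have x1: "(x + 1) mod int n = j'" unfolding j'_def j_def using mod_add_left_eq[of x "int n" 1] by simp
      have vj: "v j < x" using x(2) j_def by (simp add: hset_def)
      have vj': "x + 1 \<le> v j'" using x(1) x1 by (simp add: hset_def)
      have "v j mod int n = x mod int n" using norm jr j_def by simp
      then have "int n dvd (x - v j)" using mod_eq_dvd[of x "int n" "v j"] by simp
      then have "int n \<le> x - v j" using vj by (simp add: zdvd_imp_le)
      then have big: "v j + int n + 1 \<le> v j'" using vj' by simp
      define v' where "v' = v(j' := v j + 1, j := v j' - 1)"
      have sw: "affgen n j ` hset n v = hset n v'" unfolding v'_def by (rule swap_set[OF n jr j'_def])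
      have norm': "\<forall>r\<in>{0..<int n}. v' r mod int n = r"
      proof
        fix r assume r: "r \<in> {0..<int n}"
        show "v' r mod int n = r"
        proof (cases "r = j")
          case True
          have e1: "v j' mod int n = j'" using norm j'r by simp
          have "(v j' - 1) mod int n = (v j' mod int n - 1) mod int n" by (simp add: mod_diff_left_eq)
          also have "\<dots> = (j' - 1) mod int n" using e1 by simp
          also have "\<dots> = (j + 1 - 1) mod int n" unfolding j'_def by (simp add: mod_diff_left_eq)
          also have "\<dots> = j" using jr by simp
          finally show ?thesis using True unfolding v'_def by simp
        next
          case False
          show ?thesis
          proof (cases "r = j'")
            case True
            have e1: "v j mod int n = j" using norm jr by simp
            have "(v j + 1) mod int n = (v j mod int n + 1) mod int n" by (simp add: mod_add_left_eq)
            also have "\<dots> = j'" using e1 j'_def by simp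
            finally show ?thesis using True False ne unfolding v'_def by simp
          next
            case False2: False
            then show ?thesis using False r norm unfolding v'_def by simp
          qed
        qed
      qed
      have sumeq: "(\<Sum>r\<in>{0..<int n}. (v' r)^2) = (\<Sum>r\<in>{0..<int n}. (v r)^2) + (2 * (v j - v j') + 2)"
      proof -
        have "\<And>r. r \<in> {0..<int n} \<Longrightarrow> (v' r)^2 = (v r)^2 + (if r = j then (v j' - 1)^2 - (v j)^2 else 0) + (if r = j' then (v j + 1)^2 - (v j')^2 else 0)"
          using ne by (auto simp: v'_def)
        then have "(\<Sum>r\<in>{0..<int n}. (v' r)^2) = (\<Sum>r\<in>{0..<int n}. (v r)^2 + (if r = j then (v j' - 1)^2 - (v j)^2 else 0) + (if r = j' then (v j + 1)^2 - (v j')^2 else 0))"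
          by (rule sum.cong[OF refl])
        also have "\<dots> = (\<Sum>r\<in>{0..<int n}. (v r)^2) + ((v j' - 1)^2 - (v j)^2) + ((v j + 1)^2 - (v j')^2)"
          using jr j'r by (simp add: sum.distrib)
        also have "\<dots> = (\<Sum>r\<in>{0..<int n}. (v r)^2) + (2 * (v j - v j') + 2)"
          by (simp add: power2_eq_square algebra_simps)
        finally show ?thesis .
      qed
      have lt: "nat (\<Sum>r\<in>{0..<int n}. (v' r)^2) < m"
        using sumeq big mdef n sum_nonneg[of "{0..<int n}" "\<lambda>r. (v' r)^2"] by simp
      obtain a w where w: "w \<in> affperm n" "hset n v' = w ` {..a}"
        using less.IH[OF lt] norm' by blast
      have "hset n v = affgen n j ` hset n v'"
        unfolding sw[symmetric] image_image affgen_invol[OF n] by simp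
      then have "hset n v = (affgen n j \<circ> w) ` {..a}" using w(2) by (simp add: image_comp)
      then show ?thesis using cons_affperm[OF w(1) jr] by blast
    qed
  qed
qed

lemma sub_all: assumes "\<forall>b\<in>S. b - int n \<in> S" "y \<in> S" shows "y - int n * int k \<in> S"
proof (induction k)
  case 0 then show ?case using assms by simp
next
  case (Suc k)
  have eq: "y - int n * int (Suc k) = (y - int n * int k) - int n" by (simp add: algebra_simps)
  have h: "(y - int n * int k) - int n \<in> S" using Suc.IH assms(1) by blast
  show ?case unfolding eq by (rule h)
qed

lemma backward:
  assumes n: "n \<ge> 2" and c1: "\<forall>b\<in>S. b - int n \<in> S" and c2: "finite (S \<inter> {0<..})"
    and c3: "finite ({..<0} - S)"
  shows "\<exists>a. nice n a S"
proof -
  have Npos: "int n > 0" using n by simp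
  obtain U where U: "\<And>x. x \<in> S \<Longrightarrow> x \<le> U"
  proof
    fix x assume "x \<in> S"
    show "x \<le> Max (insert 0 (S \<inter> {0<..}))"
    proof (cases "x > 0")
      case True then show ?thesis using \<open>x \<in> S\<close> c2 by (intro Max_ge) auto
    next
      case False then show ?thesis using c2 by (meson Max_ge finite_insert insertI1 not_less order_trans)
    qed
  qed
  obtain mb where mb: "\<And>x. x \<in> {..<0} - S \<Longrightarrow> mb \<le> x"
  proof
    fix x assume "x \<in> {..<0} - S"
    then show "Min (insert 0 ({..<0} - S)) \<le> x" using c3 by (intro Min_le) auto
  qed
  have ex: "\<exists>x0\<in>S. x0 mod int n = r" if r: "r \<in> {0..<int n}" for r
  proof -
    define x0 where "x0 = r - int n * (\<bar>mb\<bar> + 1)"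
    have h1: "int n * (\<bar>mb\<bar> + 1) = int n * \<bar>mb\<bar> + int n" by (simp add: algebra_simps)
    have h2: "int n * \<bar>mb\<bar> \<ge> 1 * \<bar>mb\<bar>" using Npos by (intro mult_right_mono) auto
    have "x0 < 0" "x0 < mb" using r h1 h2 unfolding x0_def by (simp_all, linarith+)
    then have "x0 \<in> S" using mb by force
    moreover have "x0 mod int n = r"
    proof -
      have "x0 = r + (- (\<bar>mb\<bar> + 1)) * int n" unfolding x0_def by (simp add: algebra_simps)
      then have "x0 mod int n = r mod int n" by (simp only: mod_mult_self1)
      then show ?thesis using r by simp
    qed
    ultimately show ?thesis by blast
  qed
  define x0 where "x0 r = (SOME x. x \<in> S \<and> x mod int n = r)" for r
  have x0: "x0 r \<in> S" "x0 r mod int n = r" if "r \<in> {0..<int n}" for r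
    using someI_ex[OF ex[OF that, unfolded Bex_def]] unfolding x0_def by auto
  define v where "v r = Max {x \<in> S. x mod int n = r \<and> x0 r \<le> x}" for r
  have fin: "finite {x \<in> S. x mod int n = r \<and> x0 r \<le> x}" for r
    by (rule finite_subset[of _ "{x0 r..U}"]) (auto dest: U)
  have vin: "v r \<in> {x \<in> S. x mod int n = r \<and> x0 r \<le> x}" if "r \<in> {0..<int n}" for r
    unfolding v_def using x0[OF that] by (intro Max_in[OF fin]) auto
  have vge: "x \<le> v r" if "x \<in> {x \<in> S. x mod int n = r \<and> x0 r \<le> x}" for x r
    unfolding v_def using that by (intro Max_ge[OF fin])
  have norm: "\<forall>r\<in>{0..<int n}. v r mod int n = r" using vin by blast
  have Sh: "S = hset n v"
  proof
    show "S \<subseteq> hset n v"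
    proof
      fix x assume x: "x \<in> S"
      define r where "r = x mod int n"
      have r: "r \<in> {0..<int n}" using Npos r_def by simp
      have "x \<le> v r"
      proof (cases "x0 r \<le> x")
        case True then show ?thesis using x r_def by (intro vge) auto
      next
        case False then show ?thesis using vin[OF r] by auto
      qed
      then show "x \<in> hset n v" unfolding hset_def r_def by simp
    qed
  next
    show "hset n v \<subseteq> S"
    proof
      fix x assume "x \<in> hset n v"
      define r where "r = x mod int n"
      have r: "r \<in> {0..<int n}" using Npos r_def by simp
      have xle: "x \<le> v r" using \<open>x \<in> hset n v\<close> unfolding hset_def r_def by simp
      have vS: "v r \<in> S" "v r mod int n = x mod int n" using vin[OF r] r_def by auto
      then have "int n dvd (v r - x)" using mod_eq_dvd[of "v r" "int n" x] by simp
      then obtain q where q: "v r - x = int n * q" by (auto elim: dvdE)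
      have "q \<ge> 0" using q xle Npos by (metis diff_ge_0_iff_ge zero_le_mult_iff not_less)
      then have "x = v r - int n * int (nat q)" using q by simp
      moreover have "v r - int n * int (nat q) \<in> S" by (rule sub_all[OF c1 vS(1)])
      ultimately show "x \<in> S" by simp
    qed
  qed
  obtain a w where "w \<in> affperm n" "hset n v = w ` {..a}"
    using main_ind[OF n] norm by blast
  then show ?thesis unfolding nice_def Sh by blast
qed

theorem lemma5p1:
  fixes n :: nat and S :: "int set"
  assumes "n \<ge> 2"
  shows "(\<exists>a. nice n a S) \<longleftrightarrow>
           ((\<forall>b\<in>S. b - int n \<in> S) \<and> finite (S \<inter> {0<..}) \<and> finite ({..<0} - S))"
proof
  assume "\<exists>a. nice n a S"
  then obtain a w where "w \<in> affperm n" "S = w ` {..a}" unfolding nice_def by blast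
  then show "(\<forall>b\<in>S. b - int n \<in> S) \<and> finite (S \<inter> {0<..}) \<and> finite ({..<0} - S)"
    using forward[OF assms] by blast
next
  assume "(\<forall>b\<in>S. b - int n \<in> S) \<and> finite (S \<inter> {0<..}) \<and> finite ({..<0} - S)"
  then show "\<exists>a. nice n a S" using backward[OF assms] by blast
qed

end
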